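(* Let $K$ be $(\kappa,\gamma)$-strongly stable. Let $\{M_t\}_{t=-H-1}^0$ be arbitrary with $M_t\in\mathcal M$, and let $\{M_t\}_{t=1}^{T-1}$ be generated by projected online gradient descent with constant learning rate $\eta>0$: $M_{t+1}=\Pi_{\mathcal M}(M_t-\eta\nabla_Mf_t(M_t))$, where $\Pi_{\mathcal M}(X)=\arg\min_{M'\in\mathcal M}\|X-M'\|_F$. Assume there is $L_c>0$ such that for every $k\in[0,H+1]$, $t\in[0,T-1]$ and $M_{t-1-H},\dots,M_t,\check M_{t-k}\in\mathcal M$, $$|F_t(M_{t-1-H:t})-F_t(M_{t-1-H:t-k-1},\check M_{t-k},M_{t-k+1:t})|\le L_c\|M_{t-k}-\check M_{t-k}\|_F.$$ Then, with $D:=\frac{4\kappa_B\kappa^3\sqrt n}{\gamma}$, for every $M\in\mathcal M$, $$\sum_{t=0}^{T-1}F_t(M_{t-1-H:t})-\sum_{t=0}^{T-1}f_t(M)\le L_c\eta\sum_{t=0}^{T-1}\sum_{i=1}^{\min\{H+1,t\}}\sum_{k=1}^i\|\nabla_Mf_{t-k}(M_{t-k})\|_F+\frac{D^2}{2\eta}+\frac\eta2\sum_{t=0}^{T-1}\|\nabla_Mf_t(M_t)\|_F^2.$$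
   Context: Linear system $x_{t+1}=Ax_t+Bu_t+w_t$; $n:=\max\{n_x,n_u\}$, $\kappa_B:=\max\{\|B\|,1\}$; $w_s:=0$ for $s<0$; $H$ a positive integer. $(\kappa,\gamma)$-strong stability: complex $P,Q$ with $A-BK=QPQ^{-1}$, $\|P\|\le1-\gamma$, $\|K\|,\|Q\|,\|Q^{-1}\|\le\kappa$. $A_K:=A-BK$. For $M=\{M^{[0]},\dots,M^{[H-1]}\}$, $\|M\|_F:=\|[M^{[0]},\dots,M^{[H-1]}]\|_F$. $\mathcal M:=\{M:\|M^{[i]}\|\le2\kappa_B\kappa^3(1-\gamma)^i\}$. Surrogate: $\Psi^{K,h}_{t,i}(M_{t-h:t}):=A_K^i\mathbf 1_{i\le h}+\sum_{j=0}^hA_K^jBM_{t-j}^{[i-j-1]}\mathbf 1_{i-j\in[1,H]}$; $y_t:=\sum_{i=0}^{2H}\Psi^{K,H}_{t-1,i}(M_{t-1-H:t-1})w_{t-1-i}$; $v_t:=-Ky_t+\sum_{i=1}^HM_t^{[i-1]}w_{t-i}$; $F_t(M_{t-1-H:t}):=c_t(y_t,v_t)$ for differentiable convex $c_t$; $f_t(M):=F_t(M,\dots,M)$. The statement holds for any fixed realization of the noise. *)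

theory Defs
  imports "HOL-Analysis.Analysis"
begin

(* Matrices: an m x n matrix with entries in 'a is 'a^'n^'m (rows indexed by 'm).
   State dimension n_x = CARD('x), input dimension n_u = CARD('u). *)

text \<open>Matrix power w.r.t. matrix multiplication (note: ^ on vec is entrywise).\<close>
fun mpow :: "'a::semiring_1^'n^'n \<Rightarrow> nat \<Rightarrow> 'a^'n^'n" where
  "mpow A 0 = mat 1"
| "mpow A (Suc k) = A ** mpow A k"

definition opnorm :: "'a::real_normed_field^'n^'m \<Rightarrow> real" where
  "opnorm X = onorm (\<lambda>v. X *v v)"

definition strongly_stable ::
  "real \<Rightarrow> real \<Rightarrow> real^'x^'x \<Rightarrow> real^'u^'x \<Rightarrow> real^'x^'u \<Rightarrow> bool" where
  "strongly_stable \<kappa> \<gamma> A B K \<longleftrightarrow> 0 < \<gamma> \<and>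
     (\<exists>P Q Qi :: complex^'x^'x.
        Q ** Qi = mat 1 \<and> Qi ** Q = mat 1 \<and>
        (\<chi> i j. complex_of_real ((A - B ** K) $ i $ j)) = Q ** P ** Qi \<and>
        opnorm P \<le> 1 - \<gamma> \<and> opnorm K \<le> \<kappa> \<and> opnorm Q \<le> \<kappa> \<and> opnorm Qi \<le> \<kappa>)"

text \<open>A policy M = {M^[0],...,M^[H-1]} is a function nat => matrix, zero at indices >= H.\<close>
definition frob_inner :: "nat \<Rightarrow> (nat \<Rightarrow> real^'x^'u) \<Rightarrow> (nat \<Rightarrow> real^'x^'u) \<Rightarrow> real" where
  "frob_inner H M N = (\<Sum>i<H. inner (M i) (N i))"

definition frob :: "nat \<Rightarrow> (nat \<Rightarrow> real^'x^'u) \<Rightarrow> real" where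
  "frob H M = sqrt (\<Sum>i<H. (norm (M i))\<^sup>2)"

definition policy_space :: "nat \<Rightarrow> (nat \<Rightarrow> real^'x^'u) set" where
  "policy_space H = {M. \<forall>i\<ge>H. M i = 0}"

definition Mset :: "nat \<Rightarrow> real \<Rightarrow> real \<Rightarrow> real \<Rightarrow> (nat \<Rightarrow> real^'x^'u) set" where
  "Mset H \<kappa>B \<kappa> \<gamma> = {M. M \<in> policy_space H \<and>
      (\<forall>i<H. opnorm (M i) \<le> 2 * \<kappa>B * \<kappa>^3 * (1 - \<gamma>)^i)}"

definition is_grad :: "nat \<Rightarrow> ((nat \<Rightarrow> real^'x^'u) \<Rightarrow> real) \<Rightarrow> (nat \<Rightarrow> real^'x^'u)
     \<Rightarrow> (nat \<Rightarrow> real^'x^'u) \<Rightarrow> bool" where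
  "is_grad H f M G \<longleftrightarrow> G \<in> policy_space H \<and>
     (\<forall>\<epsilon>>0. \<exists>\<delta>>0. \<forall>D \<in> policy_space H. frob H D < \<delta> \<longrightarrow>
        \<bar>f (\<lambda>i. M i + D i) - f M - frob_inner H G D\<bar> \<le> \<epsilon> * frob H D)"

definition grad :: "nat \<Rightarrow> ((nat \<Rightarrow> real^'x^'u) \<Rightarrow> real) \<Rightarrow> (nat \<Rightarrow> real^'x^'u)
     \<Rightarrow> (nat \<Rightarrow> real^'x^'u)" where
  "grad H f M = (THE G. is_grad H f M G)"

definition proj :: "nat \<Rightarrow> (nat \<Rightarrow> real^'x^'u) set \<Rightarrow> (nat \<Rightarrow> real^'x^'u) \<Rightarrow> (nat \<Rightarrow> real^'x^'u)" where
  "proj H S X = (THE Y. Y \<in> S \<and> (\<forall>Z\<in>S. frob H (\<lambda>i. X i - Y i) \<le> frob H (\<lambda>i. X i - Z i)))"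

text \<open>Surrogate transfer matrix Psi^{K,h}_{t,i}(M_{t-h:t}); Ms is the policy sequence indexed by time.\<close>
definition Psi :: "nat \<Rightarrow> real^'x^'x \<Rightarrow> real^'u^'x \<Rightarrow> real^'x^'u \<Rightarrow> (int \<Rightarrow> nat \<Rightarrow> real^'x^'u)
     \<Rightarrow> int \<Rightarrow> nat \<Rightarrow> nat \<Rightarrow> real^'x^'x" where
  "Psi H A B K Ms t h i =
     (if i \<le> h then mpow (A - B ** K) i else 0) +
     (\<Sum>j\<in>{0..h}. if j < i \<and> i - j \<le> H
        then mpow (A - B ** K) j ** B ** Ms (t - int j) (i - j - 1) else 0)"

definition ysurr :: "nat \<Rightarrow> real^'x^'x \<Rightarrow> real^'u^'x \<Rightarrow> real^'x^'u \<Rightarrow> (int \<Rightarrow> real^'x)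
     \<Rightarrow> (int \<Rightarrow> nat \<Rightarrow> real^'x^'u) \<Rightarrow> int \<Rightarrow> real^'x" where
  "ysurr H A B K w Ms t = (\<Sum>i\<in>{0..2*H}. Psi H A B K Ms (t - 1) H i *v w (t - 1 - int i))"

definition vsurr :: "nat \<Rightarrow> real^'x^'x \<Rightarrow> real^'u^'x \<Rightarrow> real^'x^'u \<Rightarrow> (int \<Rightarrow> real^'x)
     \<Rightarrow> (int \<Rightarrow> nat \<Rightarrow> real^'x^'u) \<Rightarrow> int \<Rightarrow> real^'u" where
  "vsurr H A B K w Ms t = - (K *v ysurr H A B K w Ms t) + (\<Sum>i\<in>{1..H}. Ms t (i - 1) *v w (t - int i))"

text \<open>F_t(M_{t-1-H:t}) (depends only on Ms on the window [t-1-H, t]).\<close>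
definition Fsurr :: "nat \<Rightarrow> real^'x^'x \<Rightarrow> real^'u^'x \<Rightarrow> real^'x^'u \<Rightarrow> (int \<Rightarrow> real^'x)
     \<Rightarrow> (nat \<Rightarrow> real^'x \<Rightarrow> real^'u \<Rightarrow> real) \<Rightarrow> nat \<Rightarrow> (int \<Rightarrow> nat \<Rightarrow> real^'x^'u) \<Rightarrow> real" where
  "Fsurr H A B K w c t Ms = c t (ysurr H A B K w Ms (int t)) (vsurr H A B K w Ms (int t))"

definition fsurr :: "nat \<Rightarrow> real^'x^'x \<Rightarrow> real^'u^'x \<Rightarrow> real^'x^'u \<Rightarrow> (int \<Rightarrow> real^'x)
     \<Rightarrow> (nat \<Rightarrow> real^'x \<Rightarrow> real^'u \<Rightarrow> real) \<Rightarrow> nat \<Rightarrow> (nat \<Rightarrow> real^'x^'u) \<Rightarrow> real" where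
  "fsurr H A B K w c t M = Fsurr H A B K w c t (\<lambda>_. M)"

end

theory Submission
  imports Defs
begin

lemma frob_L2: "frob H X = L2_set (\<lambda>i. norm (X i)) {..<H}"
  by (simp add: frob_def L2_set_def)

lemma frob_nonneg[simp]: "0 \<le> frob H X"
  by (simp add: frob_def sum_nonneg)

lemma frob_sq: "(frob H X)\<^sup>2 = (\<Sum>i<H. (norm (X i))\<^sup>2)"
  by (simp add: frob_def sum_nonneg)

lemma norm_le_frob: "i < H \<Longrightarrow> norm (X i) \<le> frob H X"
  unfolding frob_L2 by (rule member_le_L2_set) auto

lemma frob_triangle: "frob H (\<lambda>i. a i + b i) \<le> frob H a + frob H b"
proof -
  have "frob H (\<lambda>i. a i + b i) \<le> L2_set (\<lambda>i. norm (a i) + norm (b i)) {..<H}"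
    unfolding frob_L2 by (rule L2_set_mono) (auto intro: norm_triangle_ineq)
  also have "\<dots> \<le> frob H a + frob H b"
    unfolding frob_L2 by (rule L2_set_triangle_ineq)
  finally show ?thesis .
qed

lemma frob_scale: "frob H (\<lambda>i. s *\<^sub>R X i) = \<bar>s\<bar> * frob H X"
proof -
  have "(\<Sum>i<H. (norm (s *\<^sub>R X i))\<^sup>2) = s\<^sup>2 * (\<Sum>i<H. (norm (X i))\<^sup>2)"
    by (simp add: sum_distrib_left power_mult_distrib)
  then show ?thesis by (simp add: frob_def real_sqrt_mult)
qed

lemma frob_minus_commute: "frob H (\<lambda>i. a i - b i) = frob H (\<lambda>i. b i - a i)"
  by (simp add: frob_def norm_minus_commute)

lemma frob_inner_self: "frob_inner H X X = (frob H X)\<^sup>2"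
  by (simp add: frob_inner_def frob_sq power2_norm_eq_inner)

lemma frob_inner_scale: "frob_inner H G (\<lambda>i. s *\<^sub>R X i) = s * frob_inner H G X"
  by (simp add: frob_inner_def sum_distrib_left)

lemma frob_zero_imp: "frob H X = 0 \<Longrightarrow> i < H \<Longrightarrow> X i = 0"
  using norm_le_frob[of i H X] by simp

lemma frob_expand:
  "(frob H (\<lambda>i. x i - e *\<^sub>R g i))\<^sup>2 = (frob H x)\<^sup>2 - 2 * e * frob_inner H g x + e\<^sup>2 * (frob H g)\<^sup>2"
proof -
  have "\<And>i. (norm (x i - e *\<^sub>R g i))\<^sup>2 = (norm (x i))\<^sup>2 - 2 * e * inner (g i) (x i) + e\<^sup>2 * (norm (g i))\<^sup>2"
    unfolding power2_norm_eq_inner by (simp add: inner_diff_left inner_diff_right inner_commute power2_eq_square algebra_simps)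
  then show ?thesis
    by (simp add: frob_sq frob_inner_def sum.distrib sum_subtractf sum_distrib_left)
qed

lemma policy_diff: "a \<in> policy_space H \<Longrightarrow> b \<in> policy_space H \<Longrightarrow> (\<lambda>i. a i - b i) \<in> policy_space H"
  by (simp add: policy_space_def)

lemma policy_scale: "a \<in> policy_space H \<Longrightarrow> (\<lambda>i. s *\<^sub>R a i) \<in> policy_space H"
  by (simp add: policy_space_def)

lemma frob_p1: "0 < frob H X + 1"
  using frob_nonneg[of H X] by (smt (verit))

lemma frob_p2: "0 < 2 * (frob H X + 1)"
  using frob_nonneg[of H X] by (smt (verit))

lemma is_grad_unique:
  assumes g1: "is_grad H g M G1" and g2: "is_grad H g M G2"
  shows "G1 = G2"
proof (rule ccontr)
  assume ne: "G1 \<noteq> G2"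
  define E where "E = (\<lambda>i. G1 i - G2 i)"
  have P1: "G1 \<in> policy_space H" and P2: "G2 \<in> policy_space H"
    using g1 g2 by (auto simp: is_grad_def)
  have PE: "E \<in> policy_space H" unfolding E_def by (rule policy_diff[OF P1 P2])
  have fE: "frob H E > 0"
  proof (rule ccontr)
    assume "\<not> frob H E > 0"
    then have "frob H E = 0" using frob_nonneg[of H E] by linarith
    have "G1 i = G2 i" for i
    proof (cases "i < H")
      case True
      then have "E i = 0" using frob_zero_imp[OF \<open>frob H E = 0\<close>] by blast
      then show ?thesis by (simp add: E_def)
    next
      case False
      then show ?thesis using P1 P2 by (simp add: policy_space_def)
    qed
    then show False using ne by blast
  qed
  define \<epsilon> where "\<epsilon> = frob H E / 4"
  have ep: "\<epsilon> > 0" using fE by (simp add: \<epsilon>_def)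
  obtain d1 where d1: "d1 > 0" "\<forall>D\<in>policy_space H. frob H D < d1 \<longrightarrow>
        \<bar>g (\<lambda>i. M i + D i) - g M - frob_inner H G1 D\<bar> \<le> \<epsilon> * frob H D"
    using g1 ep unfolding is_grad_def by blast
  obtain d2 where d2: "d2 > 0" "\<forall>D\<in>policy_space H. frob H D < d2 \<longrightarrow>
        \<bar>g (\<lambda>i. M i + D i) - g M - frob_inner H G2 D\<bar> \<le> \<epsilon> * frob H D"
    using g2 ep unfolding is_grad_def by blast
  define s where "s = min d1 d2 / (2 * frob H E)"
  have s: "s > 0" using d1 d2 fE by (simp add: s_def)
  define D where "D = (\<lambda>i. s *\<^sub>R E i)"
  have PD: "D \<in> policy_space H" unfolding D_def by (rule policy_scale[OF PE])
  have fD: "frob H D = s * frob H E" using s by (simp add: D_def frob_scale)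
  have "s * frob H E = min d1 d2 / 2" using fE by (simp add: s_def)
  then have "frob H D < d1" "frob H D < d2" using fD d1 d2 by auto
  with d1(2) d2(2) PD have a1: "\<bar>g (\<lambda>i. M i + D i) - g M - frob_inner H G1 D\<bar> \<le> \<epsilon> * frob H D"
    and a2: "\<bar>g (\<lambda>i. M i + D i) - g M - frob_inner H G2 D\<bar> \<le> \<epsilon> * frob H D" by auto
  have "frob_inner H G1 D - frob_inner H G2 D = frob_inner H E D"
    by (simp add: frob_inner_def E_def inner_diff_left sum_subtractf)
  also have "\<dots> = s * (frob H E)\<^sup>2"
    by (simp add: D_def frob_inner_scale frob_inner_self)
  finally have "s * (frob H E)\<^sup>2 \<le> 2 * \<epsilon> * frob H D" using a1 a2 by linarith
  then have "s * (frob H E * frob H E) \<le> s * (frob H E * (frob H E / 2))"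
  proof -
    have "2 * \<epsilon> * frob H D = s * (frob H E * (frob H E / 2))" by (simp add: fD \<epsilon>_def)
    then show ?thesis using \<open>s * (frob H E)\<^sup>2 \<le> 2 * \<epsilon> * frob H D\<close> by (simp add: power2_eq_square)
  qed
  then have "frob H E * frob H E \<le> frob H E * (frob H E / 2)" using s by simp
  then have "frob H E \<le> frob H E / 2" using fE by simp
  then show False using fE by simp
qed

lemma grad_eq: "is_grad H g M G \<Longrightarrow> grad H g M = G"
  unfolding grad_def by (rule the_equality) (auto intro: is_grad_unique)

lemma grad_ineq:
  assumes gr: "is_grad H g M G" and PM: "M \<in> policy_space H" and PM': "M' \<in> policy_space H"
    and cvx: "\<And>s. 0 < s \<Longrightarrow> s \<le> 1 \<Longrightarrow> g (\<lambda>i. M i + s *\<^sub>R (M' i - M i)) \<le> (1 - s) * g M + s * g M'"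
  shows "g M + frob_inner H G (\<lambda>i. M' i - M i) \<le> g M'"
proof (rule ccontr)
  assume neg: "\<not> ?thesis"
  define D where "D = (\<lambda>i. M' i - M i)"
  define a where "a = frob_inner H G D - (g M' - g M)"
  have a: "a > 0" using neg by (simp add: a_def D_def)
  have PD: "D \<in> policy_space H" unfolding D_def by (rule policy_diff[OF PM' PM])
  define \<epsilon> where "\<epsilon> = a / (2 * (frob H D + 1))"
  have ep: "\<epsilon> > 0" using a frob_p2[of H D] unfolding \<epsilon>_def by (intro divide_pos_pos)
  obtain d where d: "d > 0" "\<forall>D\<in>policy_space H. frob H D < d \<longrightarrow>
        \<bar>g (\<lambda>i. M i + D i) - g M - frob_inner H G D\<bar> \<le> \<epsilon> * frob H D"
    using gr ep unfolding is_grad_def by blast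
  define s where "s = min 1 (d / (2 * (frob H D + 1)))"
  have s: "s > 0" "s \<le> 1" using d frob_p2[of H D] unfolding s_def by (auto intro!: divide_pos_pos)
  have fsD: "frob H (\<lambda>i. s *\<^sub>R D i) = s * frob H D" using s by (simp add: frob_scale)
  have "s * frob H D \<le> d / (2 * (frob H D + 1)) * frob H D"
    by (rule mult_right_mono) (auto simp: s_def)
  also have "\<dots> < d"
  proof -
    have "frob H D < 2 * (frob H D + 1)" using frob_nonneg[of H D] by (smt (verit))
    moreover have "0 < 2 * (frob H D + 1)" by (rule frob_p2)
    ultimately have q: "frob H D / (2 * (frob H D + 1)) < 1"
      by (simp add: divide_less_eq_1)
    have "d / (2 * (frob H D + 1)) * frob H D = d * (frob H D / (2 * (frob H D + 1)))" by simp
    also have "\<dots> < d * 1" by (rule mult_strict_left_mono[OF q d(1)])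
    finally show ?thesis by simp
  qed
  finally have "frob H (\<lambda>i. s *\<^sub>R D i) < d" using fsD by simp
  with d(2) policy_scale[OF PD, of s] have
    b: "\<bar>g (\<lambda>i. M i + s *\<^sub>R D i) - g M - frob_inner H G (\<lambda>i. s *\<^sub>R D i)\<bar> \<le> \<epsilon> * (s * frob H D)"
    using fsD by auto
  have c: "g (\<lambda>i. M i + s *\<^sub>R D i) \<le> (1 - s) * g M + s * g M'" using cvx[OF s] by (simp add: D_def)
  have "s * frob_inner H G D - \<epsilon> * (s * frob H D) \<le> s * (g M' - g M)"
    using b c by (simp add: frob_inner_scale algebra_simps)
  then have "s * (frob_inner H G D - \<epsilon> * frob H D) \<le> s * (g M' - g M)"
    by (simp add: algebra_simps)
  then have e: "frob_inner H G D - \<epsilon> * frob H D \<le> g M' - g M" using s by simp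
  have "\<epsilon> * frob H D \<le> a / 2"
  proof -
    have "\<epsilon> * frob H D = a / 2 * (frob H D / (frob H D + 1))" by (simp add: \<epsilon>_def)
    also have "\<dots> \<le> a / 2 * 1"
    proof (rule mult_left_mono)
      have "0 < frob H D + 1" by (rule frob_p1)
      then show "frob H D / (frob H D + 1) \<le> 1" by (simp add: divide_le_eq_1)
    qed (use a in simp)
    finally show ?thesis by simp
  qed
  then show False using e a by (simp add: a_def)
qed

lemma lin_sum:
  assumes "linear L" "finite S"
  shows "L (\<Sum>k\<in>S. F k) = (\<Sum>k\<in>S. L (F k))"
  using assms(2)
proof (induction S rule: finite_induct)
  case empty then show ?case using linear_0[OF assms(1)] by simp
next
  case (insert x S) then show ?case using linear_add[OF assms(1)] by simp
qed

lemma grad_exists: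
  fixes h :: "(nat \<Rightarrow> real^'x^'u) \<Rightarrow> 'v::euclidean_space" and \<phi> :: "'v \<Rightarrow> real"
    and g :: "(nat \<Rightarrow> real^'x^'u) \<Rightarrow> real"
  assumes h_add: "\<And>a b. h (\<lambda>i. a i + b i) = h a + h b"
    and h_scale: "\<And>r a. h (\<lambda>i. r *\<^sub>R a i) = r *\<^sub>R h a"
    and g_eq: "\<And>D. g (\<lambda>i. M i + D i) = \<phi> (p + h D)"
    and diff: "\<phi> differentiable (at p)"
  shows "\<exists>G. is_grad H g M G"
proof -
  obtain L where L: "(\<phi> has_derivative L) (at p)" using diff unfolding differentiable_def by blast
  have bl: "bounded_linear L"
    and eps: "\<forall>e>0. \<exists>d>0. \<forall>y. norm (y - p) < d \<longrightarrow> norm (\<phi> y - \<phi> p - L (y - p)) \<le> e * norm (y - p)"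
    using L unfolding has_derivative_at_alt by auto
  have lL: "linear L" using bl bounded_linear.linear by blast
  have h0: "h (\<lambda>i. 0) = 0" using h_scale[of 0 "\<lambda>i. 0"] by simp
  have hsum: "h (\<lambda>i. \<Sum>k\<in>S. F k i) = (\<Sum>k\<in>S. h (F k))" if "finite S" for S and F :: "nat \<Rightarrow> nat \<Rightarrow> real^'x^'u"
    using that
  proof (induction S rule: finite_induct)
    case empty then show ?case using h0 by simp
  next
    case (insert x S)
    have "h (\<lambda>i. \<Sum>k\<in>insert x S. F k i) = h (\<lambda>i. F x i + (\<Sum>k\<in>S. F k i))"
      using insert by simp
    also have "\<dots> = h (F x) + h (\<lambda>i. \<Sum>k\<in>S. F k i)" by (rule h_add)
    finally show ?case using insert by simp
  qed
  define hk where "hk k X = h (\<lambda>i. if i = k then X else 0)" for k and X :: "real^'x^'u"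
  have lin: "linear (hk k)" for k
  proof (rule linearI)
    fix x y :: "real^'x^'u"
    have "(\<lambda>i. if i = k then x + y else 0) = (\<lambda>i. (if i = k then x else 0) + (if i = k then y else 0))"
      by auto
    then show "hk k (x + y) = hk k x + hk k y" unfolding hk_def by (simp add: h_add)
  next
    fix r and x :: "real^'x^'u"
    have "(\<lambda>i. if i = k then r *\<^sub>R x else 0) = (\<lambda>i. r *\<^sub>R (if i = k then x else 0))"
      by auto
    then show "hk k (r *\<^sub>R x) = r *\<^sub>R hk k x" unfolding hk_def by (simp add: h_scale)
  qed
  have "\<forall>k. \<exists>C>0. \<forall>X. norm (hk k X) \<le> norm X * C"
  proof
    fix k
    have "bounded_linear (hk k)" using lin[of k] linear_conv_bounded_linear by blast
    then show "\<exists>C>0. \<forall>X. norm (hk k X) \<le> norm X * C" by (rule bounded_linear.pos_bounded)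
  qed
  then obtain C where C: "\<And>k. C k > 0" "\<And>k X. norm (hk k X) \<le> norm X * C k"
    using choice[of "\<lambda>k C. C > 0 \<and> (\<forall>X. norm (hk k X) \<le> norm X * C)"] by blast
  have decomp: "h D = (\<Sum>k<H. hk k (D k))" if PD: "D \<in> policy_space H" for D
  proof -
    have "D = (\<lambda>i. \<Sum>k<H. (\<lambda>i. if i = k then D k else 0) i)"
    proof
      fix i
      show "D i = (\<Sum>k<H. (\<lambda>i. if i = k then D k else 0) i)"
        using PD by (cases "i < H") (auto simp: policy_space_def)
    qed
    then have "h D = h (\<lambda>i. \<Sum>k<H. (\<lambda>i. if i = k then D k else 0) i)" by simp
    also have "\<dots> = (\<Sum>k<H. hk k (D k))" by (subst hsum) (auto simp: hk_def)
    finally show ?thesis .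
  qed
  define Gk where "Gk k = adjoint (\<lambda>X. L (hk k X)) 1" for k
  have Gk: "L (hk k X) = inner X (Gk k)" for k X
  proof -
    have ll: "linear (\<lambda>X. L (hk k X))"
      using linear_compose[OF lin[of k] lL] by (simp add: o_def)
    show ?thesis using adjoint_works[OF ll, of X 1] by (simp add: Gk_def)
  qed
  define G where "G = (\<lambda>k. if k < H then Gk k else 0)"
  have PG: "G \<in> policy_space H" by (simp add: G_def policy_space_def)
  have ell: "L (h D) = frob_inner H G D" if PD: "D \<in> policy_space H" for D
  proof -
    have "L (h D) = (\<Sum>k<H. L (hk k (D k)))" unfolding decomp[OF PD] by (rule lin_sum[OF lL]) simp
    also have "\<dots> = frob_inner H G D" by (simp add: Gk frob_inner_def G_def inner_commute)
    finally show ?thesis .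
  qed
  define CC where "CC = 1 + (\<Sum>k<H. C k)"
  have CC: "CC > 0"
  proof -
    have "0 \<le> (\<Sum>k<H. C k)" using C(1) by (simp add: sum_nonneg less_imp_le)
    then show ?thesis by (simp add: CC_def)
  qed
  have hbound: "norm (h D) \<le> CC * frob H D" if PD: "D \<in> policy_space H" for D
  proof -
    have "norm (h D) \<le> (\<Sum>k<H. norm (hk k (D k)))" using decomp[OF PD] norm_sum by simp
    also have "\<dots> \<le> (\<Sum>k<H. frob H D * C k)"
    proof (rule sum_mono)
      fix k assume "k \<in> {..<H}"
      then have "norm (D k) \<le> frob H D" by (simp add: norm_le_frob)
      then have "norm (D k) * C k \<le> frob H D * C k" using C(1)[of k] by (simp add: mult_right_mono)
      then show "norm (hk k (D k)) \<le> frob H D * C k" using C(2)[of k "D k"] by linarith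
    qed
    also have "\<dots> = frob H D * (\<Sum>k<H. C k)" by (simp add: sum_distrib_left)
    also have "\<dots> \<le> frob H D * CC" by (rule mult_left_mono) (auto simp: CC_def)
    finally show ?thesis by (simp add: mult.commute)
  qed
  have gM: "g M = \<phi> p" using g_eq[of "\<lambda>i. 0"] h0 by simp
  have "is_grad H g M G"
    unfolding is_grad_def
  proof (intro conjI PG allI impI)
    fix \<epsilon> :: real assume ep: "\<epsilon> > 0"
    then obtain d where d: "d > 0" "\<And>y. norm (y - p) < d \<Longrightarrow> norm (\<phi> y - \<phi> p - L (y - p)) \<le> (\<epsilon> / CC) * norm (y - p)"
      using eps CC by (meson divide_pos_pos)
    show "\<exists>\<delta>>0. \<forall>D\<in>policy_space H. frob H D < \<delta> \<longrightarrow>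
        \<bar>g (\<lambda>i. M i + D i) - g M - frob_inner H G D\<bar> \<le> \<epsilon> * frob H D"
    proof (intro exI[of _ "d / CC"] conjI ballI impI)
      show "0 < d / CC" using d CC by simp
      fix D :: "nat \<Rightarrow> real^'x^'u" assume PD: "D \<in> policy_space H" and fD: "frob H D < d / CC"
      have nh: "norm (h D) < d"
      proof -
        have "CC * frob H D < CC * (d / CC)" using fD CC by (rule mult_strict_left_mono)
        then show ?thesis using hbound[OF PD] CC by simp
      qed
      have "\<bar>g (\<lambda>i. M i + D i) - g M - frob_inner H G D\<bar> = norm (\<phi> (p + h D) - \<phi> p - L ((p + h D) - p))"
        using g_eq[of D] gM ell[OF PD] by simp
      also have "\<dots> \<le> (\<epsilon> / CC) * norm ((p + h D) - p)" using d(2)[of "p + h D"] nh by simp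
      also have "\<dots> \<le> (\<epsilon> / CC) * (CC * frob H D)"
      proof -
        have "norm ((p + h D) - p) \<le> CC * frob H D" using hbound[OF PD] by simp
        moreover have "0 \<le> \<epsilon> / CC" using ep CC by simp
        ultimately show ?thesis by (rule mult_left_mono)
      qed
      also have "\<dots> = \<epsilon> * frob H D" using CC by simp
      finally show "\<bar>g (\<lambda>i. M i + D i) - g M - frob_inner H G D\<bar> \<le> \<epsilon> * frob H D" .
    qed
  qed
  then show ?thesis by blast
qed

definition Psi1 :: "nat \<Rightarrow> real^'x^'x \<Rightarrow> real^'u^'x \<Rightarrow> real^'x^'u \<Rightarrow> (nat \<Rightarrow> real^'x^'u) \<Rightarrow> nat \<Rightarrow> real^'x^'x" where
  "Psi1 H A B K D i = (\<Sum>j\<in>{0..H}. if j < i \<and> i - j \<le> H then mpow (A - B ** K) j ** B ** D (i - j - 1) else 0)"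

definition Ylin :: "nat \<Rightarrow> real^'x^'x \<Rightarrow> real^'u^'x \<Rightarrow> real^'x^'u \<Rightarrow> (int \<Rightarrow> real^'x) \<Rightarrow> int \<Rightarrow> (nat \<Rightarrow> real^'x^'u) \<Rightarrow> real^'x" where
  "Ylin H A B K w t D = (\<Sum>i\<in>{0..2*H}. Psi1 H A B K D i *v w (t - 1 - int i))"

definition Vlin :: "nat \<Rightarrow> real^'x^'x \<Rightarrow> real^'u^'x \<Rightarrow> real^'x^'u \<Rightarrow> (int \<Rightarrow> real^'x) \<Rightarrow> int \<Rightarrow> (nat \<Rightarrow> real^'x^'u) \<Rightarrow> real^'u" where
  "Vlin H A B K w t D = - (K *v Ylin H A B K w t D) + (\<Sum>i\<in>{1..H}. D (i - 1) *v w (t - int i))"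

lemma Psi_const: "Psi H A B K (\<lambda>_. M) s H i = (if i \<le> H then mpow (A - B ** K) i else 0) + Psi1 H A B K M i"
  by (simp add: Psi_def Psi1_def)

lemma Psi1_add: "Psi1 H A B K (\<lambda>k. a k + b k) i = Psi1 H A B K a i + Psi1 H A B K b i"
  unfolding Psi1_def sum.distrib[symmetric] by (rule sum.cong) (auto simp: matrix_add_ldistrib)

lemma Psi1_scale: "Psi1 H A B K (\<lambda>k. r *\<^sub>R a k) i = r *\<^sub>R Psi1 H A B K a i"
  unfolding Psi1_def scaleR_sum_right by (rule sum.cong) (auto simp: matrix_scalar_ac scalar_matrix_assoc)

lemma Ylin_add: "Ylin H A B K w t (\<lambda>k. a k + b k) = Ylin H A B K w t a + Ylin H A B K w t b"
  unfolding Ylin_def sum.distrib[symmetric] by (rule sum.cong) (auto simp: Psi1_add matrix_vector_mult_add_rdistrib)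

lemma Ylin_scale: "Ylin H A B K w t (\<lambda>k. r *\<^sub>R a k) = r *\<^sub>R Ylin H A B K w t a"
  unfolding Ylin_def scaleR_sum_right by (rule sum.cong) (auto simp: Psi1_scale scaleR_matrix_vector_assoc)

lemma Vlin_add: "Vlin H A B K w t (\<lambda>k. a k + b k) = Vlin H A B K w t a + Vlin H A B K w t b"
  unfolding Vlin_def Ylin_add
  by (simp add: matrix_vector_right_distrib matrix_vector_mult_add_rdistrib sum.distrib algebra_simps)

lemma Vlin_scale: "Vlin H A B K w t (\<lambda>k. r *\<^sub>R a k) = r *\<^sub>R Vlin H A B K w t a"
  unfolding Vlin_def Ylin_scale
  by (simp add: matrix_vector_mult_scaleR scaleR_matrix_vector_assoc[symmetric] scaleR_sum_right scaleR_diff_right)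

lemma ysurr_affine:
  "ysurr H A B K w (\<lambda>_. \<lambda>i. M i + D i) t = ysurr H A B K w (\<lambda>_. M) t + Ylin H A B K w t D"
  unfolding ysurr_def Ylin_def Psi_const Psi1_add sum.distrib[symmetric]
  by (rule sum.cong) (auto simp: matrix_vector_mult_add_rdistrib)

lemma vsurr_affine:
  "vsurr H A B K w (\<lambda>_. \<lambda>i. M i + D i) t = vsurr H A B K w (\<lambda>_. M) t + Vlin H A B K w t D"
  unfolding vsurr_def Vlin_def ysurr_affine
  by (simp add: matrix_vector_right_distrib matrix_vector_mult_add_rdistrib sum.distrib algebra_simps)

lemma f_eq:
  "fsurr H A B K w c t (\<lambda>i. M i + D i) =
    (\<lambda>q. c t (fst q) (snd q)) ((ysurr H A B K w (\<lambda>_. M) (int t), vsurr H A B K w (\<lambda>_. M) (int t))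
       + (Ylin H A B K w (int t) D, Vlin H A B K w (int t) D))"
  by (simp add: fsurr_def Fsurr_def ysurr_affine vsurr_affine)

lemma f_facts:
  fixes A :: "real^'x^'x" and B :: "real^'u^'x" and K :: "real^'x^'u"
  assumes c_diff: "\<And>p. (\<lambda>q. c t (fst q) (snd q)) differentiable (at p)"
    and c_convex: "convex_on UNIV (\<lambda>q. c t (fst q) (snd q))"
  shows "is_grad H (fsurr H A B K w c t) M0 (grad H (fsurr H A B K w c t) M0)"
    and "M0 \<in> policy_space H \<Longrightarrow> M' \<in> policy_space H \<Longrightarrow>
      fsurr H A B K w c t M0 + frob_inner H (grad H (fsurr H A B K w c t) M0) (\<lambda>i. M' i - M0 i)
        \<le> fsurr H A B K w c t M'"
proof -
  define \<phi> where "\<phi> = (\<lambda>q. c t (fst q) (snd q))"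
  define p where "p = (ysurr H A B K w (\<lambda>_. M0) (int t), vsurr H A B K w (\<lambda>_. M0) (int t))"
  define h where "h = (\<lambda>D. (Ylin H A B K w (int t) D, Vlin H A B K w (int t) D))"
  define g where "g = fsurr H A B K w c t"
  have geq: "g (\<lambda>i. M0 i + D i) = \<phi> (p + h D)" for D
    unfolding g_def \<phi>_def p_def h_def by (rule f_eq)
  have "\<exists>G. is_grad H g M0 G"
    by (rule grad_exists[of h g M0 \<phi> p]) (auto simp: h_def Ylin_add Vlin_add Ylin_scale Vlin_scale geq \<phi>_def c_diff)
  then obtain G where G: "is_grad H g M0 G" by blast
  then have gg: "grad H g M0 = G" by (rule grad_eq)
  show "is_grad H (fsurr H A B K w c t) M0 (grad H (fsurr H A B K w c t) M0)"
    using G gg by (simp add: g_def)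
  assume P0: "M0 \<in> policy_space H" and P1: "M' \<in> policy_space H"
  have h0: "h (\<lambda>i. 0) = 0" using Ylin_scale[of H A B K w "int t" 0 "\<lambda>i. 0"] Vlin_scale[of H A B K w "int t" 0 "\<lambda>i. 0"]
    by (simp add: h_def zero_prod_def)
  have gM: "g M0 = \<phi> p" using geq[of "\<lambda>i. 0"] h0 by simp
  have gM': "g M' = \<phi> (p + h (\<lambda>i. M' i - M0 i))" using geq[of "\<lambda>i. M' i - M0 i"] by simp
  have "g M0 + frob_inner H G (\<lambda>i. M' i - M0 i) \<le> g M'"
  proof (rule grad_ineq[OF G P0 P1])
    fix s :: real assume s: "0 < s" "s \<le> 1"
    have "h (\<lambda>i. s *\<^sub>R (M' i - M0 i)) = s *\<^sub>R h (\<lambda>i. M' i - M0 i)"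
      by (simp add: h_def Ylin_scale Vlin_scale)
    then have "g (\<lambda>i. M0 i + s *\<^sub>R (M' i - M0 i)) = \<phi> ((1 - s) *\<^sub>R p + s *\<^sub>R (p + h (\<lambda>i. M' i - M0 i)))"
      using geq[of "\<lambda>i. s *\<^sub>R (M' i - M0 i)"] by (simp add: algebra_simps)
    also have "\<dots> \<le> (1 - s) * \<phi> p + s * \<phi> (p + h (\<lambda>i. M' i - M0 i))"
      using convex_onD[OF c_convex[folded \<phi>_def]] s by simp
    finally show "g (\<lambda>i. M0 i + s *\<^sub>R (M' i - M0 i)) \<le> (1 - s) * g M0 + s * g M'"
      using gM gM' by simp
  qed
  then show "fsurr H A B K w c t M0 + frob_inner H (grad H (fsurr H A B K w c t) M0) (\<lambda>i. M' i - M0 i)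
        \<le> fsurr H A B K w c t M'"
    using gg by (simp add: g_def)
qed

lemma Fsurr_local:
  assumes eq: "\<And>s. 1 \<le> s \<Longrightarrow> int t - 1 - int H \<le> s \<Longrightarrow> s \<le> int t \<Longrightarrow> Ms s = Ms' s"
    and noise: "\<And>s. s < 0 \<Longrightarrow> w s = 0"
  shows "Fsurr H A B K w c t Ms = Fsurr H A B K w c t Ms'"
proof -
  have Y: "ysurr H A B K w Ms (int t) = ysurr H A B K w Ms' (int t)"
    unfolding ysurr_def
  proof (rule sum.cong[OF refl])
    fix i assume i: "i \<in> {0..2*H}"
    show "Psi H A B K Ms (int t - 1) H i *v w (int t - 1 - int i) = Psi H A B K Ms' (int t - 1) H i *v w (int t - 1 - int i)"
    proof (cases "int t - 1 - int i < 0")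
      case True then show ?thesis using noise by simp
    next
      case False
      have "Psi H A B K Ms (int t - 1) H i = Psi H A B K Ms' (int t - 1) H i"
        unfolding Psi_def
      proof (intro arg_cong2[where f="(+)"] refl sum.cong)
        fix j assume j: "j \<in> {0..H}"
        show "(if j < i \<and> i - j \<le> H then mpow (A - B ** K) j ** B ** Ms (int t - 1 - int j) (i - j - 1) else 0) =
              (if j < i \<and> i - j \<le> H then mpow (A - B ** K) j ** B ** Ms' (int t - 1 - int j) (i - j - 1) else 0)"
        proof (cases "j < i")
          case True
          then have "Ms (int t - 1 - int j) = Ms' (int t - 1 - int j)"
            using False j by (intro eq) auto
          then show ?thesis by simp
        qed simp
      qed
      then show ?thesis by simp
    qed
  qed
  have V: "vsurr H A B K w Ms (int t) = vsurr H A B K w Ms' (int t)"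
  proof (cases "t = 0")
    case True
    then show ?thesis unfolding vsurr_def Y using noise by simp
  next
    case False
    then have "Ms (int t) = Ms' (int t)" by (intro eq) auto
    then show ?thesis unfolding vsurr_def Y by simp
  qed
  show ?thesis unfolding Fsurr_def Y V ..
qed

lemma opnorm_bound: "norm (Y *v v) \<le> opnorm Y * norm v"
  for Y :: "'a::{euclidean_space,real_normed_field}^'n^'m"
  unfolding opnorm_def using onorm[OF matrix_vector_mul_bounded_linear[of Y]] by simp

lemma opnorm_nonneg: "0 \<le> opnorm Y"
  for Y :: "'a::{euclidean_space,real_normed_field}^'n^'m"
  unfolding opnorm_def using onorm_pos_le[OF matrix_vector_mul_bounded_linear[of Y]] by simp

lemma opnorm_le_iff: "opnorm Y \<le> r \<longleftrightarrow> (\<forall>v. norm (Y *v v) \<le> r * norm v)"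
  for Y :: "real^'n^'m"
proof
  assume "opnorm Y \<le> r"
  then show "\<forall>v. norm (Y *v v) \<le> r * norm v"
    using opnorm_bound[of Y] by (meson mult_right_mono norm_ge_zero order_trans)
next
  assume "\<forall>v. norm (Y *v v) \<le> r * norm v"
  then show "opnorm Y \<le> r" unfolding opnorm_def by (intro onorm_le) auto
qed

lemma opnorm_add: "opnorm (X + Y) \<le> opnorm X + opnorm Y"
  for X Y :: "real^'n^'m"
proof -
  have "opnorm (X + Y) = onorm (\<lambda>v. X *v v + Y *v v)"
    by (simp add: opnorm_def matrix_vector_mult_add_rdistrib)
  also have "\<dots> \<le> opnorm X + opnorm Y" unfolding opnorm_def
    by (rule onorm_triangle) (rule matrix_vector_mul_bounded_linear)+
  finally show ?thesis .
qed

lemma opnorm_uminus: "opnorm (- X) = opnorm X"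
  for X :: "real^'n^'m"
proof -
  have "(\<lambda>v. (- X) *v v) = (\<lambda>v. - (X *v v))"
    by (auto simp: vec_eq_iff matrix_vector_mult_def sum_negf)
  then show ?thesis unfolding opnorm_def using onorm_neg[of "\<lambda>v. X *v v"] by simp
qed

lemma opnorm_diff: "opnorm (X - Y) \<le> opnorm X + opnorm Y"
  for X Y :: "real^'n^'m"
  using opnorm_add[of X "- Y"] opnorm_uminus[of Y] by simp

lemma opnorm_scale: "opnorm (r *\<^sub>R X) = \<bar>r\<bar> * opnorm X"
  for X :: "real^'n^'m"
proof -
  have "(\<lambda>v. (r *\<^sub>R X) *v v) = (\<lambda>v. r *\<^sub>R (X *v v))"
    by (simp add: scaleR_matrix_vector_assoc)
  then show ?thesis unfolding opnorm_def
    using onorm_scaleR[OF matrix_vector_mul_bounded_linear[of X], of r] by simp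
qed

definition Sball :: "real \<Rightarrow> (real^'x^'u) set" where
  "Sball r = {Y. opnorm Y \<le> r}"

lemma Sball_convex: "convex (Sball r)"
  unfolding convex_def Sball_def
proof (intro ballI allI impI, simp)
  fix x y :: "real^'x^'u" and u v :: real
  assume a: "opnorm x \<le> r" "opnorm y \<le> r" "0 \<le> u" "0 \<le> v" "u + v = 1"
  have "opnorm (u *\<^sub>R x + v *\<^sub>R y) \<le> u * opnorm x + v * opnorm y"
    using opnorm_add[of "u *\<^sub>R x" "v *\<^sub>R y"] a by (simp add: opnorm_scale)
  also have "\<dots> \<le> u * r + v * r" using a by (intro add_mono mult_left_mono) auto
  also have "\<dots> = r * (u + v)" by (simp add: algebra_simps)
  also have "\<dots> = r" using a by simp
  finally show "opnorm (u *\<^sub>R x + v *\<^sub>R y) \<le> r" .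
qed

lemma Sball_closed: "closed (Sball r)"
proof -
  have eq: "Sball r = (\<Inter>v. {Y. norm (Y *v v) \<le> r * norm v})"
    unfolding Sball_def using opnorm_le_iff by blast
  have "closed {Y::real^'x^'u. norm (Y *v v) \<le> r * norm v}" for v :: "real^'x"
  proof -
    have "linear (\<lambda>Y::real^'x^'u. Y *v v)"
      by (rule linearI) (simp_all add: matrix_vector_mult_add_rdistrib scaleR_matrix_vector_assoc)
    then have "bounded_linear (\<lambda>Y::real^'x^'u. Y *v v)" using linear_conv_bounded_linear by blast
    then have "continuous_on UNIV (\<lambda>Y::real^'x^'u. norm (Y *v v))"
      by (intro continuous_on_norm linear_continuous_on)
    then show ?thesis by (intro closed_Collect_le) (auto intro: continuous_on_const)
  qed
  then show ?thesis unfolding eq by (intro closed_INT) auto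
qed

lemma Mset_iff: "M \<in> Mset H kB k g \<longleftrightarrow> M \<in> policy_space H \<and> (\<forall>i<H. M i \<in> Sball (2 * kB * k^3 * (1 - g)^i))"
  by (simp add: Mset_def Sball_def)

lemma proj_props:
  fixes X M :: "nat \<Rightarrow> real^'x^'u"
  assumes Mne: "M \<in> Mset H kB k g"
  shows "proj H (Mset H kB k g) X \<in> Mset H kB k g"
    and "\<And>Z. Z \<in> Mset H kB k g \<Longrightarrow> frob H (\<lambda>i. proj H (Mset H kB k g) X i - Z i) \<le> frob H (\<lambda>i. X i - Z i)"
proof -
  define S where "S i = (Sball (2 * kB * k^3 * (1 - g)^i) :: (real^'x^'u) set)" for i :: nat
  have cl: "closed (S i)" "convex (S i)" for i unfolding S_def by (auto intro: Sball_closed Sball_convex)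
  have ne: "S i \<noteq> {}" if "i < H" for i
  proof -
    have "M i \<in> S i" using Mne that by (simp add: Mset_iff S_def)
    then show ?thesis by blast
  qed
  define P where "P = (\<lambda>i. if i < H then closest_point (S i) (X i) else 0)"
  have PM: "P \<in> Mset H kB k g"
    unfolding Mset_iff S_def[symmetric] using ne cl
    by (auto simp: P_def policy_space_def intro: closest_point_in_set)
  have dP: "norm (X i - P i) \<le> norm (X i - Z i)" if "Z \<in> Mset H kB k g" "i < H" for Z i
  proof -
    have "Z i \<in> S i" using that by (auto simp: Mset_iff S_def)
    then show ?thesis using closest_point_le[OF cl(1)[of i], where x="Z i" and a="X i"] that(2)
      by (simp add: P_def dist_norm)
  qed
  have argmin: "frob H (\<lambda>i. X i - P i) \<le> frob H (\<lambda>i. X i - Z i)" if "Z \<in> Mset H kB k g" for Z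
    unfolding frob_L2 by (rule L2_set_mono) (use dP[OF that] in auto)
  have "proj H (Mset H kB k g) X = P"
    unfolding proj_def
  proof (rule the_equality)
    show "P \<in> Mset H kB k g \<and> (\<forall>Z\<in>Mset H kB k g. frob H (\<lambda>i. X i - P i) \<le> frob H (\<lambda>i. X i - Z i))"
      using PM argmin by blast
  next
    fix Y assume Y: "Y \<in> Mset H kB k g \<and> (\<forall>Z\<in>Mset H kB k g. frob H (\<lambda>i. X i - Y i) \<le> frob H (\<lambda>i. X i - Z i))"
    then have "frob H (\<lambda>i. X i - Y i) \<le> frob H (\<lambda>i. X i - P i)" using PM by blast
    then have "(frob H (\<lambda>i. X i - Y i))\<^sup>2 \<le> (frob H (\<lambda>i. X i - P i))\<^sup>2"
      by (intro power_mono) auto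
    then have le: "(\<Sum>i<H. (norm (X i - Y i))\<^sup>2 - (norm (X i - P i))\<^sup>2) \<le> 0"
      by (simp add: frob_sq sum_subtractf)
    have nn: "\<forall>i\<in>{..<H}. 0 \<le> (norm (X i - Y i))\<^sup>2 - (norm (X i - P i))\<^sup>2"
      using dP[of Y] Y by (auto intro: power_mono)
    have "(\<Sum>i<H. (norm (X i - Y i))\<^sup>2 - (norm (X i - P i))\<^sup>2) = 0"
    proof -
      have "0 \<le> (\<Sum>i<H. (norm (X i - Y i))\<^sup>2 - (norm (X i - P i))\<^sup>2)"
        by (rule sum_nonneg) (use nn in blast)
      then show ?thesis using le by linarith
    qed
    then have eqs: "\<forall>i\<in>{..<H}. (norm (X i - Y i))\<^sup>2 - (norm (X i - P i))\<^sup>2 = 0"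
      using sum_nonneg_eq_0_iff[OF finite_lessThan, of H "\<lambda>i. (norm (X i - Y i))\<^sup>2 - (norm (X i - P i))\<^sup>2"] nn by blast
    show "Y = P"
    proof
      fix i show "Y i = P i"
      proof (cases "i < H")
        case True
        have "(norm (X i - Y i))\<^sup>2 = (norm (X i - P i))\<^sup>2" using eqs True by auto
        then have nrm: "norm (X i - Y i) = norm (X i - P i)" by (simp add: power2_eq_iff_nonneg)
        have YS: "Y i \<in> S i" using Y True by (auto simp: Mset_iff S_def)
        have "Y i = closest_point (S i) (X i)"
        proof (rule closest_point_unique[OF cl(2)[of i] cl(1)[of i] YS], intro ballI)
          fix z assume "z \<in> S i"
          then show "dist (X i) (Y i) \<le> dist (X i) z"
            using closest_point_le[OF cl(1)[of i], where x=z and a="X i"] nrm True by (simp add: P_def dist_norm)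
        qed
        then show ?thesis using True by (simp add: P_def)
      next
        case False
        then show ?thesis using Y by (simp add: P_def Mset_iff policy_space_def)
      qed
    qed
  qed
  then show "proj H (Mset H kB k g) X \<in> Mset H kB k g" using PM by simp
  fix Z :: "nat \<Rightarrow> real^'x^'u" assume Z: "Z \<in> Mset H kB k g"
  have "frob H (\<lambda>i. P i - Z i) \<le> frob H (\<lambda>i. X i - Z i)"
    unfolding frob_L2
  proof (rule L2_set_mono)
    fix i assume "i \<in> {..<H}"
    then have i: "i < H" by simp
    have ZS: "Z i \<in> S i" using Z i by (auto simp: Mset_iff S_def)
    have "dist (closest_point (S i) (X i)) (closest_point (S i) (Z i)) \<le> dist (X i) (Z i)"
      by (rule closest_point_lipschitz[OF cl(2)[of i] cl(1)[of i] ne[OF i]])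
    then show "norm (P i - Z i) \<le> norm (X i - Z i)"
      using closest_point_self[OF ZS] i by (simp add: P_def dist_norm)
  qed auto
  then show "frob H (\<lambda>i. proj H (Mset H kB k g) X i - Z i) \<le> frob H (\<lambda>i. X i - Z i)"
    using \<open>proj H (Mset H kB k g) X = P\<close> by simp
qed

lemma norm_sq_le_opnorm:
  fixes Y :: "real^'x^'u"
  shows "(norm Y)\<^sup>2 \<le> real CARD('x) * (opnorm Y)\<^sup>2"
proof -
  have col: "(norm (Y *v axis b 1))\<^sup>2 = (\<Sum>a\<in>UNIV. (Y$a$b)\<^sup>2)" for b
    unfolding matrix_vector_mult_basis power2_norm_eq_inner
    by (simp add: inner_vec_def column_def power2_eq_square)
  have "(norm Y)\<^sup>2 = (\<Sum>a\<in>UNIV. \<Sum>b\<in>UNIV. (Y$a$b)\<^sup>2)"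
    unfolding power2_norm_eq_inner by (simp add: inner_vec_def power2_eq_square)
  also have "\<dots> = (\<Sum>b\<in>UNIV. \<Sum>a\<in>UNIV. (Y$a$b)\<^sup>2)" by (rule sum.swap)
  also have "\<dots> = (\<Sum>b\<in>UNIV. (norm (Y *v axis b 1))\<^sup>2)" by (simp add: col)
  also have "\<dots> \<le> (\<Sum>b\<in>(UNIV::'x set). (opnorm Y)\<^sup>2)"
  proof (rule sum_mono)
    fix b :: 'x
    have "norm (Y *v axis b 1) \<le> opnorm Y" using opnorm_bound[of Y "axis b 1"] by simp
    then show "(norm (Y *v axis b 1))\<^sup>2 \<le> (opnorm Y)\<^sup>2" by (intro power_mono) auto
  qed
  also have "\<dots> = real CARD('x) * (opnorm Y)\<^sup>2" by simp
  finally show ?thesis .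
qed

lemma diam:
  fixes M1 M2 :: "nat \<Rightarrow> real^'x^'u" and n :: nat
  assumes M1: "M1 \<in> Mset H kB k g" and M2: "M2 \<in> Mset H kB k g" and g: "0 < g" "g \<le> 1"
    and n: "CARD('x) \<le> n"
  shows "(frob H (\<lambda>i. M1 i - M2 i))\<^sup>2 \<le> (4 * kB * k^3 * sqrt (real n) / g)\<^sup>2"
proof -
  define R where "R = 2 * kB * k^3"
  define q where "q = (1 - g)\<^sup>2"
  have q: "0 \<le> q" "q < 1"
  proof -
    show "0 \<le> q" by (simp add: q_def)
    have "(1 - g)\<^sup>2 < 1\<^sup>2" using g by (intro power_strict_mono) auto
    then show "q < 1" by (simp add: q_def)
  qed
  have per: "(norm (M1 i - M2 i))\<^sup>2 \<le> 4 * real n * R\<^sup>2 * q^i" if i: "i < H" for i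
  proof -
    have o1: "opnorm (M1 i) \<le> R * (1 - g)^i" and o2: "opnorm (M2 i) \<le> R * (1 - g)^i"
      using M1 M2 i by (auto simp: Mset_def R_def)
    have "opnorm (M1 i - M2 i) \<le> 2 * (R * (1 - g)^i)" using opnorm_diff[of "M1 i" "M2 i"] o1 o2 by linarith
    then have "(opnorm (M1 i - M2 i))\<^sup>2 \<le> (2 * (R * (1 - g)^i))\<^sup>2"
      by (intro power_mono opnorm_nonneg)
    also have "\<dots> = 4 * R\<^sup>2 * q^i" by (simp add: q_def power_mult_distrib power_mult[symmetric] mult.commute)
    finally have a: "(opnorm (M1 i - M2 i))\<^sup>2 \<le> 4 * R\<^sup>2 * q^i" .
    have "(norm (M1 i - M2 i))\<^sup>2 \<le> real CARD('x) * (opnorm (M1 i - M2 i))\<^sup>2" by (rule norm_sq_le_opnorm)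
    also have "\<dots> \<le> real n * (4 * R\<^sup>2 * q^i)"
      using n a by (intro mult_mono) auto
    finally show ?thesis by (simp add: mult.assoc)
  qed
  have "(frob H (\<lambda>i. M1 i - M2 i))\<^sup>2 = (\<Sum>i<H. (norm (M1 i - M2 i))\<^sup>2)" by (rule frob_sq)
  also have "\<dots> \<le> (\<Sum>i<H. 4 * real n * R\<^sup>2 * q^i)" by (rule sum_mono) (use per in auto)
  also have "\<dots> = 4 * real n * R\<^sup>2 * (\<Sum>i<H. q^i)" by (simp add: sum_distrib_left)
  also have "\<dots> \<le> 4 * real n * R\<^sup>2 * (1 / g\<^sup>2)"
  proof (rule mult_left_mono)
    have "(\<Sum>i<H. q^i) = (1 - q^H) / (1 - q)" using q by (simp add: sum_gp_strict)
    also have "\<dots> \<le> 1 / (1 - q)" using q by (intro divide_right_mono) auto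
    also have "\<dots> \<le> 1 / g\<^sup>2"
    proof (rule divide_left_mono)
      have "1 - q = g * (2 - g)" by (simp add: q_def power2_eq_square algebra_simps)
      also have "\<dots> \<ge> g * g" using g by (intro mult_left_mono) auto
      finally show "g\<^sup>2 \<le> 1 - q" by (simp add: power2_eq_square)
      show "0 < (1 - q) * g\<^sup>2" using q g by simp
    qed simp
    finally show "(\<Sum>i<H. q^i) \<le> 1 / g\<^sup>2" .
  qed simp
  also have "\<dots> = (4 * kB * k^3 * sqrt (real n) / g)\<^sup>2"
    by (simp add: R_def power_mult_distrib power_divide)
  finally show ?thesis .
qed

lemma ogd_alg:
  fixes e x b I g :: real
  assumes e: "0 < e" and h: "x \<le> b - 2*e*I + e\<^sup>2*g"
  shows "I \<le> (b - x)/(2*e) + e/2*g"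
proof -
  have "I = (2*e*I)/(2*e)" using e by simp
  also have "\<dots> \<le> (b - x + e\<^sup>2*g)/(2*e)"
    by (rule divide_right_mono) (use h e in linarith)+
  also have "\<dots> = (b-x)/(2*e) + e/2*g" using e by (simp add: field_simps power2_eq_square)
  finally show ?thesis .
qed

lemma frob_inner_swap: "frob_inner H G (\<lambda>i. a i - b i) = - frob_inner H G (\<lambda>i. b i - a i)"
  by (simp add: frob_inner_def inner_diff_right sum_subtractf)

lemma frob_zero_fun: "frob H (\<lambda>i. a i - a i) = 0"
  by (simp add: frob_def)

theorem proposition2:
  fixes A :: "real^'x^'x" and B :: "real^'u^'x" and K :: "real^'x^'u"
    and w :: "int \<Rightarrow> real^'x"
    and c :: "nat \<Rightarrow> real^'x \<Rightarrow> real^'u \<Rightarrow> real"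
    and H T :: nat and \<kappa> \<gamma> \<eta> L\<^sub>c :: real
    and Ms :: "int \<Rightarrow> nat \<Rightarrow> real^'x^'u"
  defines "\<kappa>B \<equiv> max (opnorm B) 1"
  defines "n \<equiv> max CARD('x) CARD('u)"
  defines "\<M> \<equiv> Mset H \<kappa>B \<kappa> \<gamma>"
  defines "F \<equiv> Fsurr H A B K w c"
  defines "f \<equiv> fsurr H A B K w c"
  defines "D \<equiv> 4 * \<kappa>B * \<kappa>^3 * sqrt (real n) / \<gamma>"
  assumes H_pos: "0 < H"
    and noise: "\<And>s. s < 0 \<Longrightarrow> w s = 0"
    and c_diff: "\<And>t p. (\<lambda>q. c t (fst q) (snd q)) differentiable (at p)"
    and c_convex: "\<And>t. convex_on UNIV (\<lambda>q. c t (fst q) (snd q))"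
    and stable: "strongly_stable \<kappa> \<gamma> A B K"
    and init: "\<And>t. - int H - 1 \<le> t \<Longrightarrow> t \<le> 0 \<Longrightarrow> Ms t \<in> \<M>"
    and eta_pos: "0 < \<eta>"
    and ogd: "\<And>t. t + 1 < T \<Longrightarrow>
        Ms (int t + 1) = proj H \<M> (\<lambda>i. Ms (int t) i - \<eta> *\<^sub>R grad H (f t) (Ms (int t)) i)"
    and Lc_pos: "0 < L\<^sub>c"
    and Lc: "\<And>k t Ms' Mc. k \<le> H + 1 \<Longrightarrow> t < T \<Longrightarrow>
        (\<And>s. int t - 1 - int H \<le> s \<Longrightarrow> s \<le> int t \<Longrightarrow> Ms' s \<in> \<M>) \<Longrightarrow> Mc \<in> \<M> \<Longrightarrow>
        \<bar>F t Ms' - F t (Ms'(int t - int k := Mc))\<bar>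
          \<le> L\<^sub>c * frob H (\<lambda>i. Ms' (int t - int k) i - Mc i)"
    and M: "M \<in> \<M>"
  shows "(\<Sum>t<T. F t Ms) - (\<Sum>t<T. f t M)
    \<le> L\<^sub>c * \<eta> * (\<Sum>t<T. \<Sum>i\<in>{1..min (H+1) t}. \<Sum>k\<in>{1..i}.
            frob H (grad H (f (t - k)) (Ms (int (t - k)))))
      + D\<^sup>2 / (2 * \<eta>)
      + \<eta> / 2 * (\<Sum>t<T. (frob H (grad H (f t) (Ms (int t))))\<^sup>2)"
proof -
  have gam: "0 < \<gamma>" "\<gamma> \<le> 1"
  proof -
    show "0 < \<gamma>" using stable by (simp add: strongly_stable_def)
    obtain P :: "complex^'x^'x" where "opnorm P \<le> 1 - \<gamma>"
      using stable unfolding strongly_stable_def by blast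
    then show "\<gamma> \<le> 1" using opnorm_nonneg[of P] by linarith
  qed
  have ncard: "CARD('x) \<le> n" by (simp add: n_def)
  have PM: "\<And>X. X \<in> \<M> \<Longrightarrow> X \<in> policy_space H" by (simp add: \<M>_def Mset_def)
  define G where "G t = grad H (f t) (Ms (int t))" for t
  define X where "X t = (\<lambda>i. Ms (int t) i - \<eta> *\<^sub>R G t i)" for t
  have ogd': "Ms (int (Suc t)) = proj H \<M> (X t)" if "Suc t < T" for t
    using ogd[of t] that by (simp add: X_def G_def add.commute)
  have MsM: "Ms s \<in> \<M>" if "- int H - 1 \<le> s" "s \<le> int T - 1" for s
  proof (cases "s \<le> 0")
    case True then show ?thesis using init that by simp
  next
    case False
    define t where "t = nat (s - 1)"
    have st: "s = int (Suc t)" "Suc t < T" using False that by (auto simp: t_def)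
    show ?thesis unfolding st(1) ogd'[OF st(2)] \<M>_def by (rule proj_props(1)) (use M in \<open>simp add: \<M>_def\<close>)
  qed
  have step: "frob H (\<lambda>i. Ms (int (Suc t)) i - Z i) \<le> frob H (\<lambda>i. X t i - Z i)" if "Suc t < T" "Z \<in> \<M>" for t Z
    unfolding ogd'[OF that(1)] using that(2) M unfolding \<M>_def by (intro proj_props(2))
  have fineq: "f t (Ms (int t)) - f t M \<le> frob_inner H (G t) (\<lambda>i. Ms (int t) i - M i)" if "t < T" for t
  proof -
    have "Ms (int t) \<in> \<M>" using that by (intro MsM) auto
    then have "f t (Ms (int t)) + frob_inner H (G t) (\<lambda>i. M i - Ms (int t) i) \<le> f t M"
      unfolding G_def f_def using PM M
      by (intro f_facts(2)) (auto simp: c_diff c_convex)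
    then show ?thesis using frob_inner_swap[of H "G t" M "Ms (int t)"] by linarith
  qed
  define b where "b t = (frob H (\<lambda>i. Ms (int t) i - M i))\<^sup>2" for t
  define gg where "gg t = (frob H (G t))\<^sup>2" for t
  have Xexp: "(frob H (\<lambda>i. X t i - M i))\<^sup>2 = b t - 2 * \<eta> * frob_inner H (G t) (\<lambda>i. Ms (int t) i - M i) + \<eta>\<^sup>2 * gg t" for t
  proof -
    have "(\<lambda>i. X t i - M i) = (\<lambda>i. (Ms (int t) i - M i) - \<eta> *\<^sub>R G t i)"
      by (auto simp: X_def algebra_simps)
    then show ?thesis by (simp add: frob_expand b_def gg_def)
  qed
  have I1: "frob_inner H (G t) (\<lambda>i. Ms (int t) i - M i) \<le> (b t - b (Suc t))/(2*\<eta>) + \<eta>/2 * gg t"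
    if "Suc t < T" for t
  proof (rule ogd_alg[OF eta_pos])
    have "frob H (\<lambda>i. Ms (int (Suc t)) i - M i) \<le> frob H (\<lambda>i. X t i - M i)"
      using step[OF that M] .
    then have "b (Suc t) \<le> (frob H (\<lambda>i. X t i - M i))\<^sup>2"
      unfolding b_def by (intro power_mono) auto
    then show "b (Suc t) \<le> b t - 2 * \<eta> * frob_inner H (G t) (\<lambda>i. Ms (int t) i - M i) + \<eta>\<^sup>2 * gg t"
      using Xexp[of t] by simp
  qed
  have I2: "frob_inner H (G t) (\<lambda>i. Ms (int t) i - M i) \<le> (b t - 0)/(2*\<eta>) + \<eta>/2 * gg t" for t
  proof (rule ogd_alg[OF eta_pos])
    show "0 \<le> b t - 2 * \<eta> * frob_inner H (G t) (\<lambda>i. Ms (int t) i - M i) + \<eta>\<^sup>2 * gg t"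
      using Xexp[of t] by (metis zero_le_power2)
  qed
  have b0: "b 0 \<le> D\<^sup>2"
  proof -
    have "Ms 0 \<in> \<M>" using init by simp
    then show ?thesis unfolding b_def D_def using M ncard gam unfolding \<M>_def
      by (intro diam) auto
  qed
  have regret: "(\<Sum>t<T. f t (Ms (int t)) - f t M) \<le> D\<^sup>2/(2*\<eta>) + \<eta>/2 * (\<Sum>t<T. gg t)"
  proof (cases T)
    case 0
    then show ?thesis using eta_pos by simp
  next
    case (Suc N)
    have "(\<Sum>t<T. f t (Ms (int t)) - f t M) \<le> (\<Sum>t<T. frob_inner H (G t) (\<lambda>i. Ms (int t) i - M i))"
      by (rule sum_mono) (use fineq in auto)
    also have "\<dots> = (\<Sum>t<N. frob_inner H (G t) (\<lambda>i. Ms (int t) i - M i)) + frob_inner H (G N) (\<lambda>i. Ms (int N) i - M i)"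
      by (simp add: Suc)
    also have "\<dots> \<le> (\<Sum>t<N. (b t - b (Suc t))/(2*\<eta>) + \<eta>/2 * gg t) + ((b N - 0)/(2*\<eta>) + \<eta>/2 * gg N)"
      by (intro add_mono sum_mono I1 I2) (auto simp: Suc)
    also have "\<dots> = (b 0 - b N)/(2*\<eta>) + \<eta>/2 * (\<Sum>t<N. gg t) + ((b N - 0)/(2*\<eta>) + \<eta>/2 * gg N)"
      by (simp add: sum.distrib sum_divide_distrib[symmetric] sum_distrib_left[symmetric] sum_lessThan_telescope')
    also have "\<dots> = b 0/(2*\<eta>) + \<eta>/2 * (\<Sum>t<T. gg t)"
      using eta_pos by (simp add: Suc field_simps)
    also have "\<dots> \<le> D\<^sup>2/(2*\<eta>) + \<eta>/2 * (\<Sum>t<T. gg t)"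
      using b0 eta_pos by (simp add: divide_right_mono)
    finally show ?thesis .
  qed
  have S1: "frob H (\<lambda>j. Ms (int t - int i) j - Ms (int t) j) \<le> \<eta> * (\<Sum>k\<in>{1..i}. frob H (G (t - k)))"
    if "t < T" "i \<le> t" for t i
    using that(2)
  proof (induction i)
    case 0 then show ?case by (simp add: frob_def)
  next
    case (Suc i)
    define s where "s = t - Suc i"
    have s1: "int t - int (Suc i) = int s" "int t - int i = int (Suc s)" "Suc s < T" "t - Suc i = s"
      using Suc.prems that(1) by (auto simp: s_def)
    have Ms_s: "Ms (int s) \<in> \<M>" using s1 by (intro MsM) auto
    have "frob H (\<lambda>j. Ms (int t - int (Suc i)) j - Ms (int t) j)
        = frob H (\<lambda>j. (Ms (int s) j - Ms (int (Suc s)) j) + (Ms (int (Suc s)) j - Ms (int t) j))"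
      unfolding s1(1) by simp
    also have "\<dots> \<le> frob H (\<lambda>j. Ms (int s) j - Ms (int (Suc s)) j) + frob H (\<lambda>j. Ms (int (Suc s)) j - Ms (int t) j)"
      by (rule frob_triangle)
    also have "\<dots> \<le> \<eta> * frob H (G s) + \<eta> * (\<Sum>k\<in>{1..i}. frob H (G (t - k)))"
    proof (rule add_mono)
      have "frob H (\<lambda>j. Ms (int s) j - Ms (int (Suc s)) j) = frob H (\<lambda>j. Ms (int (Suc s)) j - Ms (int s) j)"
        by (rule frob_minus_commute)
      also have "\<dots> \<le> frob H (\<lambda>j. X s j - Ms (int s) j)" by (rule step[OF s1(3) Ms_s])
      also have "\<dots> = frob H (\<lambda>j. (- \<eta>) *\<^sub>R G s j)" by (simp add: X_def)
      also have "\<dots> = \<eta> * frob H (G s)" using eta_pos frob_scale[of H "- \<eta>" "G s"] by (simp del: scaleR_minus_left)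
      finally show "frob H (\<lambda>j. Ms (int s) j - Ms (int (Suc s)) j) \<le> \<eta> * frob H (G s)" .
      show "frob H (\<lambda>j. Ms (int (Suc s)) j - Ms (int t) j) \<le> \<eta> * (\<Sum>k\<in>{1..i}. frob H (G (t - k)))"
        using Suc s1 by simp
    qed
    also have "\<dots> = \<eta> * (\<Sum>k\<in>{1..Suc i}. frob H (G (t - k)))"
      using s1 by (simp add: algebra_simps)
    finally show ?case .
  qed
  have S2: "F t Ms - f t (Ms (int t)) \<le> L\<^sub>c * \<eta> * (\<Sum>i\<in>{1..min (H+1) t}. \<Sum>k\<in>{1..i}. frob H (G (t - k)))"
    if tT: "t < T" for t
  proof -
    define N where "N m = (\<lambda>s. if int t - int m \<le> s \<and> s < int t then Ms (int t) else Ms s)" for m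
    have Mst: "Ms (int t) \<in> \<M>" using tT by (intro MsM) auto
    have chain: "F t Ms - F t (N m) \<le> L\<^sub>c * (\<Sum>i\<in>{1..m}. frob H (\<lambda>j. Ms (int t - int i) j - Ms (int t) j))"
      if "m \<le> min (H+1) t" for m
      using that
    proof (induction m)
      case 0
      have "N 0 = Ms" unfolding N_def by (rule ext) auto
      then show ?case by simp
    next
      case (Suc m)
      have upd: "N (Suc m) = (N m)(int t - int (Suc m) := Ms (int t))"
        unfolding N_def by (rule ext) auto
      have Nm: "N m (int t - int (Suc m)) = Ms (int t - int (Suc m))" by (simp add: N_def)
      have win: "N m s \<in> \<M>" if "int t - 1 - int H \<le> s" "s \<le> int t" for s
        using that tT Mst by (auto simp: N_def intro!: MsM)
      have "\<bar>F t (N m) - F t ((N m)(int t - int (Suc m) := Ms (int t)))\<bar>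
          \<le> L\<^sub>c * frob H (\<lambda>i. N m (int t - int (Suc m)) i - Ms (int t) i)"
        using Suc.prems tT win Mst by (intro Lc) auto
      then have "F t (N m) - F t (N (Suc m)) \<le> L\<^sub>c * frob H (\<lambda>j. Ms (int t - int (Suc m)) j - Ms (int t) j)"
        unfolding upd Nm by linarith
      moreover have "F t Ms - F t (N m) \<le> L\<^sub>c * (\<Sum>i\<in>{1..m}. frob H (\<lambda>j. Ms (int t - int i) j - Ms (int t) j))"
        using Suc by simp
      ultimately show ?case by (simp add: algebra_simps)
    qed
    define m where "m = min (H+1) t"
    have Nend: "F t (N m) = f t (Ms (int t))"
      unfolding F_def f_def fsurr_def
    proof (rule Fsurr_local[OF _ noise])
      fix s assume s: "1 \<le> s" "int t - 1 - int H \<le> s" "s \<le> int t"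
      show "N m s = Ms (int t)" using s by (auto simp: N_def m_def)
    qed
    have "F t Ms - f t (Ms (int t)) \<le> L\<^sub>c * (\<Sum>i\<in>{1..m}. frob H (\<lambda>j. Ms (int t - int i) j - Ms (int t) j))"
      using chain[of m] Nend by (simp add: m_def)
    also have "\<dots> \<le> L\<^sub>c * (\<Sum>i\<in>{1..m}. \<eta> * (\<Sum>k\<in>{1..i}. frob H (G (t - k))))"
      using Lc_pos by (intro mult_left_mono sum_mono S1[OF tT]) (auto simp: m_def)
    also have "\<dots> = L\<^sub>c * \<eta> * (\<Sum>i\<in>{1..min (H+1) t}. \<Sum>k\<in>{1..i}. frob H (G (t - k)))"
      by (simp add: m_def sum_distrib_left mult.assoc)
    finally show ?thesis .
  qed
  have "(\<Sum>t<T. F t Ms) - (\<Sum>t<T. f t M) = (\<Sum>t<T. F t Ms - f t (Ms (int t))) + (\<Sum>t<T. f t (Ms (int t)) - f t M)"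
    by (simp add: sum_subtractf)
  also have "\<dots> \<le> (\<Sum>t<T. L\<^sub>c * \<eta> * (\<Sum>i\<in>{1..min (H+1) t}. \<Sum>k\<in>{1..i}. frob H (G (t - k))))
       + (D\<^sup>2/(2*\<eta>) + \<eta>/2 * (\<Sum>t<T. gg t))"
    by (intro add_mono sum_mono S2 regret) auto
  also have "\<dots> = L\<^sub>c * \<eta> * (\<Sum>t<T. \<Sum>i\<in>{1..min (H+1) t}. \<Sum>k\<in>{1..i}.
            frob H (grad H (f (t - k)) (Ms (int (t - k)))))
      + D\<^sup>2 / (2 * \<eta>)
      + \<eta> / 2 * (\<Sum>t<T. (frob H (grad H (f t) (Ms (int t))))\<^sup>2)"
    by (simp add: G_def gg_def sum_distrib_left)
  finally show ?thesis .
qed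

end
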